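(* Let $k,h,d\in\mathbb{P}$ and let $b_1,\dots,b_k\in\mathbb{P}$. Let $A=(a,ha+db_1,\dots,ha+db_k)$ with $\gcd(A)=1$ and $\gcd(a,d)=1$, and put $B=(b_1,\dots,b_k)$. Then for every $0\le r\le a-1$, $$N_{dr}=\min\{\,O_B(ma+r)\cdot ha+(ma+r)d \;:\; m\in\mathbb{N}\,\}.$$
   Context: $\mathbb{N}=\{0,1,2,\dots\}$, $\mathbb{P}=\{1,2,\dots\}$. For $A=(a,c_1,\dots,c_k)$ of positive integers with $\gcd(A)=1$ and an integer $r$, $N_r$ denotes the least nonnegative integer $a_0$ with $a_0\equiv r \pmod a$ that can be written as $a_0=\sum_{i=1}^k c_ix_i$ with all $x_i\in\mathbb{N}$ (so $N_r$ depends only on $r \bmod a$). For $B=(b_1,\dots,b_k)$ and an integer $M$, $O_B(M)=\min\{\sum_{i=1}^k x_i : \sum_{i=1}^k b_ix_i=M,\ x_i\in\mathbb{N}\}$ (taken to be $+\infty$ if there is no such representation). *)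

theory Defs
  imports Main "HOL-Library.Extended_Nat"
begin

definition representable :: "nat list \<Rightarrow> nat \<Rightarrow> bool" where
  "representable cs n \<longleftrightarrow>
     (\<exists>xs::nat list. length xs = length cs \<and> n = (\<Sum>i<length cs. cs ! i * xs ! i))"

text \<open>N_r for A = (a, c_1, ..., c_k): least nonnegative a0 with a0 = r (mod a)
  representable by the c_i.\<close>
definition N_val :: "nat \<Rightarrow> nat list \<Rightarrow> int \<Rightarrow> nat" where
  "N_val a cs r = (LEAST n::nat. int n mod int a = r mod int a \<and> representable cs n)"

text \<open>O_B(M): minimal number of summands, infinity if no representation.\<close>
definition O_B :: "nat list \<Rightarrow> int \<Rightarrow> enat" where
  "O_B bs M = (INF xs \<in> {xs::nat list. length xs = length bs \<and>
        (\<Sum>i<length bs. int (bs ! i * xs ! i)) = M}. enat (sum_list xs))"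

end

theory Submission imports Defs "HOL-Number_Theory.Cong" begin
lemma exist_rep:
  fixes a :: nat and bs :: "nat list" and t :: int
  assumes "a > 0" "int (Gcd (insert a (set bs))) dvd t"
  shows "\<exists>xs. length xs = length bs \<and> (\<Sum>i<length bs. int (bs!i * xs!i)) mod int a = t mod int a"
  using assms
proof (induction bs arbitrary: t)
  case Nil
  then show ?case by (simp add: mod_eq_0_iff_dvd)
next
  case (Cons b bs)
  define g' where "g' = Gcd (insert a (set bs))"
  have "Gcd (insert a (set (b#bs))) = gcd b g'"
    unfolding g'_def by (simp add: gcd.left_commute)
  with Cons.prems(2) obtain k where tk: "t = int (gcd b g') * k" by (auto elim: dvdE)
  obtain u v where uv: "u * int b + v * int g' = gcd (int b) (int g')" using bezout_int by blast
  have "int g' dvd k * v * int g'" by simp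
  then obtain xs where xs: "length xs = length bs"
     "(\<Sum>i<length bs. int (bs!i * xs!i)) mod int a = (k * v * int g') mod int a"
    using Cons.IH[of "k * v * int g'"] Cons.prems(1) unfolding g'_def by blast
  define x0 where "x0 = nat ((k*u) mod int a)"
  have x0: "int x0 mod int a = (k*u) mod int a"
    unfolding x0_def using Cons.prems(1) by simp
  have "(\<Sum>i<length (b#bs). int ((b#bs)!i * (x0#xs)!i)) = int b * int x0 + (\<Sum>i<length bs. int (bs!i * xs!i))"
    by (simp only: length_Cons sum.lessThan_Suc_shift nth_Cons_0 nth_Cons_Suc) simp
  also have "\<dots> mod int a = (int b * (k*u) + k * v * int g') mod int a"
    by (metis mod_add_cong mod_mult_right_eq x0 xs(2))
  also have "int b * (k*u) + k * v * int g' = t"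
    using tk uv by (simp add: algebra_simps) (metis mult.commute distrib_left mult.assoc)
  finally show ?case using xs(1) by (intro exI[of _ "x0#xs"]) simp
qed

lemma sum_ident:
  fixes bs xs :: "nat list"
  assumes "length xs = length bs"
  shows "(\<Sum>i<length (map (\<lambda>b. h * a + d * b) bs). map (\<lambda>b. h * a + d * b) bs ! i * xs ! i)
       = h * a * sum_list xs + d * (\<Sum>i<length bs. bs!i * xs!i)"
proof -
  have "(\<Sum>i<length (map (\<lambda>b. h * a + d * b) bs). map (\<lambda>b. h * a + d * b) bs ! i * xs ! i)
      = (\<Sum>i<length bs. h * a * xs!i + d * (bs!i * xs!i))"
    by (intro sum.cong) (auto simp: algebra_simps)
  also have "\<dots> = h * a * (\<Sum>i<length bs. xs!i) + d * (\<Sum>i<length bs. bs!i * xs!i)"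
    by (simp add: sum.distrib sum_distrib_left)
  also have "(\<Sum>i<length bs. xs!i) = sum_list xs"
    using assms by (simp add: sum_list_sum_nth atLeast0LessThan)
  finally show ?thesis .
qed

theorem mainTheorem1:
  fixes a h d :: nat and bs :: "nat list" and r :: nat
  assumes "a > 0" and "h > 0" and "d > 0"
    and "bs \<noteq> []" and "\<forall>b \<in> set bs. b > 0"
    and "Gcd (set (a # map (\<lambda>b. h * a + d * b) bs)) = 1"
    and "coprime a d"
    and "r \<le> a - 1"
  shows "(\<exists>m::nat. enat (N_val a (map (\<lambda>b. h * a + d * b) bs) (int (d * r)))
              = O_B bs (int (m * a + r)) * enat (h * a) + enat ((m * a + r) * d))
       \<and> (\<forall>m::nat. enat (N_val a (map (\<lambda>b. h * a + d * b) bs) (int (d * r)))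
              \<le> O_B bs (int (m * a + r)) * enat (h * a) + enat ((m * a + r) * d))"
proof -
  define cs where "cs = map (\<lambda>b. h * a + d * b) bs"
  define P where "P n \<longleftrightarrow> int n mod int a = int (d * r) mod int a \<and> representable cs n" for n
  have N_def: "N_val a cs (int (d * r)) = (LEAST n. P n)"
    unfolding N_val_def P_def by simp
  have ra: "r < a" using assms(1,8) by simp
  define Sm where "Sm m = {xs::nat list. length xs = length bs \<and>
        (\<Sum>i<length bs. int (bs ! i * xs ! i)) = int (m * a + r)}" for m
  have OB: "O_B bs (int (m * a + r)) = Inf ((\<lambda>xs. enat (sum_list xs)) ` Sm m)" for m
    unfolding O_B_def Sm_def by simp
  have Pgood: "P (h * a * sum_list xs + d * (m * a + r))"
    if "length xs = length bs" "(\<Sum>i<length bs. bs!i * xs!i) = m * a + r" for xs m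
  proof -
    have rep: "representable cs (h * a * sum_list xs + d * (m * a + r))"
      unfolding representable_def cs_def
      using that sum_ident[OF that(1), of h a d] by (intro exI[of _ xs]) simp
    have "h * a * sum_list xs + d * (m * a + r) = d * r + a * (h * sum_list xs + d * m)"
      by (simp add: algebra_simps)
    hence "int (h * a * sum_list xs + d * (m * a + r)) mod int a = int (d * r) mod int a"
      by (metis mod_mult_self2 of_nat_add of_nat_mult mult.commute)
    with rep show ?thesis unfolding P_def by simp
  qed
  have upper: "enat (LEAST n. P n) \<le> O_B bs (int (m * a + r)) * enat (h * a) + enat ((m * a + r) * d)" for m
  proof (cases "Sm m = {}")
    case True
    have "O_B bs (int (m * a + r)) = \<infinity>" unfolding OB True by (simp add: Inf_enat_def)
    then show ?thesis using assms(1,2) by simp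
  next
    case False
    have "Inf ((\<lambda>xs. enat (sum_list xs)) ` Sm m) \<in> (\<lambda>xs. enat (sum_list xs)) ` Sm m"
      using False unfolding Inf_enat_def by (auto intro: LeastI)
    then obtain xs where xs: "xs \<in> Sm m" and eq: "O_B bs (int (m * a + r)) = enat (sum_list xs)"
      unfolding OB by blast
    have l: "length xs = length bs" and s: "(\<Sum>i<length bs. bs!i * xs!i) = m * a + r"
    proof -
      have "length xs = length bs \<and> (\<Sum>i<length bs. int (bs ! i * xs ! i)) = int (m * a + r)"
        using xs unfolding Sm_def by simp
      then show "length xs = length bs" "(\<Sum>i<length bs. bs!i * xs!i) = m * a + r"
        by (metis of_nat_sum of_nat_eq_iff)+
    qed
    have "(LEAST n. P n) \<le> h * a * sum_list xs + d * (m * a + r)"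
      by (rule Least_le, rule Pgood[OF l s])
    then show ?thesis unfolding eq by (simp add: algebra_simps)
  qed
  have g1: "Gcd (insert a (set bs)) = 1"
  proof -
    have "Gcd (insert a (set bs)) dvd Gcd (set (a # cs))"
    proof (rule Gcd_greatest)
      fix y assume "y \<in> set (a # cs)"
      then consider "y = a" | b where "b \<in> set bs" "y = h * a + d * b" unfolding cs_def by auto
      then show "Gcd (insert a (set bs)) dvd y"
      proof cases
        case 1 then show ?thesis by (simp add: Gcd_dvd)
      next
        case 2
        have "Gcd (insert a (set bs)) dvd a" "Gcd (insert a (set bs)) dvd b"
          using 2 by (metis Gcd_dvd insertI1 insertI2)+
        then show ?thesis using 2 by simp
      qed
    qed
    then have "Gcd (insert a (set bs)) dvd 1" unfolding cs_def by (simp only: assms(6))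
    then show ?thesis by simp
  qed
  obtain xs where xs: "length xs = length bs"
    "(\<Sum>i<length bs. int (bs!i * xs!i)) mod int a = int r mod int a"
    using exist_rep[OF assms(1), of bs "int r"] g1 by auto
  define M where "M = (\<Sum>i<length bs. bs!i * xs!i)"
  have "int M mod int a = int r" using xs(2) ra unfolding M_def by (simp add: of_nat_sum)
  hence "M mod a = r" by (metis of_nat_eq_iff zmod_int)
  hence "M = (M div a) * a + r" by (metis div_mult_mod_eq)
  hence "P (LEAST n. P n)" using Pgood[OF xs(1)] unfolding M_def by (metis LeastI)
  then obtain ys where ys: "length ys = length bs"
    "(LEAST n. P n) = h * a * sum_list ys + d * (\<Sum>i<length bs. bs!i * ys!i)"
    and cg: "int (LEAST n. P n) mod int a = int (d * r) mod int a"
    unfolding P_def representable_def cs_def using sum_ident by auto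
  define M' where "M' = (\<Sum>i<length bs. bs!i * ys!i)"
  have "(LEAST n. P n) = d * M' + a * (h * sum_list ys)" using ys(2) unfolding M'_def by (simp add: algebra_simps)
  with cg have "int (d * M') mod int a = int (d * r) mod int a"
    by (metis mod_mult_self2 of_nat_add of_nat_mult mult.commute)
  hence "[d * M' = d * r] (mod a)" by (metis cong_def of_nat_eq_iff zmod_int)
  hence "[M' = r] (mod a)" using cong_mult_lcancel_nat assms(7) by (metis coprime_commute)
  hence "M' mod a = r" using ra by (simp add: cong_def)
  hence M'eq: "M' = (M' div a) * a + r" by (metis div_mult_mod_eq)
  define m0 where "m0 = M' div a"
  have "(\<Sum>i<length bs. int (bs ! i * ys ! i)) = int (m0 * a + r)"
    using M'eq unfolding M'_def m0_def by (metis of_nat_sum)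
  hence "ys \<in> Sm m0" unfolding Sm_def using ys(1) by simp
  hence "O_B bs (int (m0 * a + r)) \<le> enat (sum_list ys)"
    unfolding OB by (rule INF_lower)
  hence "O_B bs (int (m0 * a + r)) * enat (h * a) + enat ((m0 * a + r) * d)
       \<le> enat (sum_list ys) * enat (h * a) + enat ((m0 * a + r) * d)"
    by (intro add_right_mono mult_right_mono) auto
  also have "\<dots> = enat (LEAST n. P n)"
    using ys(2) M'eq unfolding M'_def m0_def by (simp add: algebra_simps)
  finally have "enat (LEAST n. P n) = O_B bs (int (m0 * a + r)) * enat (h * a) + enat ((m0 * a + r) * d)"
    using upper[of m0] by (rule antisym[rotated])
  then show ?thesis using upper unfolding N_def[unfolded cs_def] by blast
qed
end
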